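(* Let $\Gamma$ be a finite connected graph with $m$ edges and genus $g\ge1$, $B\in\mathbb Z^{g\times m}$ with rows a $\mathbb Z$-basis of $H_1(\Gamma,\mathbb Z)\subset\mathbb Z^m$, and $Q=BB^T$. Let $\mathbf a$ be a vertex of $V_Q$ and $[\mathbf a]$ its equivalence class. Then the convex hull of $[\mathbf a]$ equals $\mathbf a-D_{\mathbf a,Q}=\{\mathbf a-\mathbf x:\mathbf x\in D_{\mathbf a,Q}\}$, and $|[\mathbf a]|=|\mathcal D_{\mathbf a,Q}|$.
   Context: Edge lengths are all $1$, so $Q=BB^T$. $V_Q=\{\mathbf a\in\mathbb R^g:\ \mathbf a^TQ\mathbf a\le(\mathbf a-\mathbf c)^TQ(\mathbf a-\mathbf c)\ \forall\mathbf c\in\mathbb Z^g\}$. For a vertex $\mathbf a$ of $V_Q$, $\mathcal D_{\mathbf a,Q}=\{\mathbf c\in\mathbb Z^g:\ \mathbf a^TQ\mathbf a=(\mathbf a-\mathbf c)^TQ(\mathbf a-\mathbf c)\}$ and $D_{\mathbf a,Q}$ is its convex hull. On the vertex set of $V_Q$, $\mathbf a\sim\mathbf a'$ iff $\mathbf a'=\mathbf a-\mathbf c_0$ for some $\mathbf c_0\in\mathcal D_{\mathbf a,Q}$ (an equivalence relation); $[\mathbf a]$ denotes the class of $\mathbf a$. *)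

theory Defs
  imports "HOL-Analysis.Analysis"
begin

text \<open>A finite graph (multi-edges and loops allowed) with vertex type 'v and edge type 'm,
  each edge given an (arbitrary) orientation src e \<rightarrow> tgt e.\<close>

definition graph_connected :: "('m \<Rightarrow> 'v) \<Rightarrow> ('m \<Rightarrow> 'v) \<Rightarrow> bool" where
  "graph_connected src tgt \<longleftrightarrow>
     (\<forall>u v. (u, v) \<in> ({(src e, tgt e) | e. True} \<union> {(tgt e, src e) | e. True})\<^sup>*)"

definition H1 :: "('m::finite \<Rightarrow> 'v) \<Rightarrow> ('m \<Rightarrow> 'v) \<Rightarrow> (int ^ 'm) set" where
  "H1 src tgt = {x. \<forall>v. (\<Sum>e\<in>{e. tgt e = v}. x $ e) = (\<Sum>e\<in>{e. src e = v}. x $ e)}"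

definition rows_Z_basis :: "int ^ 'm ^ 'g \<Rightarrow> (int ^ 'm) set \<Rightarrow> bool" where
  "rows_Z_basis B H \<longleftrightarrow> (\<forall>i. B $ i \<in> H) \<and>
     (\<forall>x\<in>H. \<exists>!l :: int ^ 'g. x = (\<Sum>i\<in>UNIV. l $ i *s B $ i))"

definition int_points :: "(real ^ 'g) set" where
  "int_points = {c. \<forall>i. c $ i \<in> \<int>}"

definition qf :: "real ^ 'g ^ 'g \<Rightarrow> real ^ 'g \<Rightarrow> real" where
  "qf Q a = a \<bullet> (Q *v a)"

definition voronoi :: "real ^ 'g ^ 'g \<Rightarrow> (real ^ 'g) set" where
  "voronoi Q = {a. \<forall>c\<in>int_points. qf Q a \<le> qf Q (a - c)}"

definition voronoi_vertex :: "real ^ 'g ^ 'g \<Rightarrow> real ^ 'g \<Rightarrow> bool" where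
  "voronoi_vertex Q a \<longleftrightarrow> a extreme_point_of voronoi Q"

definition Dset :: "real ^ 'g ^ 'g \<Rightarrow> real ^ 'g \<Rightarrow> (real ^ 'g) set" where
  "Dset Q a = {c\<in>int_points. qf Q a = qf Q (a - c)}"

definition vertex_class :: "real ^ 'g ^ 'g \<Rightarrow> real ^ 'g \<Rightarrow> (real ^ 'g) set" where
  "vertex_class Q a = {a'. voronoi_vertex Q a' \<and> (\<exists>c0\<in>Dset Q a. a' = a - c0)}"

end

theory Submission
  imports Defs
begin

lemma int_points_add: "x \<in> int_points \<Longrightarrow> y \<in> int_points \<Longrightarrow> x + y \<in> int_points"
  by (auto simp: int_points_def)

lemma int_points_diff: "x \<in> int_points \<Longrightarrow> y \<in> int_points \<Longrightarrow> x - y \<in> int_points"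
  by (auto simp: int_points_def)

lemma int_points_uminus: "x \<in> int_points \<Longrightarrow> - x \<in> int_points"
  by (auto simp: int_points_def)

lemma qf_shift: "qf Q (x + c) - qf Q x = x \<bullet> (Q *v c) + c \<bullet> (Q *v x) + qf Q c"
  by (simp add: qf_def matrix_vector_right_distrib inner_add_left inner_add_right)

lemma qf_shift_comb:
  fixes Q :: "real^'g^'g"
  shows "qf Q (((1-u) *\<^sub>R p + u *\<^sub>R q) + c) - qf Q ((1-u) *\<^sub>R p + u *\<^sub>R q)
     = (1-u) * (qf Q (p + c) - qf Q p) + u * (qf Q (q + c) - qf Q q)"
  unfolding qf_shift
  by (simp add: matrix_vector_right_distrib matrix_vector_mult_scaleR inner_add_left
      inner_add_right algebra_simps)

lemma shift_in_voronoi: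
  fixes Q :: "real^'g^'g" and x c :: "real^'g"
  assumes "x \<in> voronoi Q" "c \<in> int_points" "qf Q (x + c) = qf Q x"
  shows "x + c \<in> voronoi Q"
  unfolding voronoi_def
proof safe
  fix c' :: "real^'g" assume c': "c' \<in> int_points"
  have "qf Q x \<le> qf Q (x - (c' - c))"
    using assms(1) int_points_diff[OF c' assms(2)] by (auto simp: voronoi_def)
  also have "x - (c' - c) = x + c - c'" by simp
  finally show "qf Q (x + c) \<le> qf Q (x + c - c')" using assms(3) by simp
qed

lemma key:
  assumes vert: "voronoi_vertex Q a" and cD: "c \<in> Dset Q a"
  shows "voronoi_vertex Q (a - c)"
proof -
  have aV: "a \<in> voronoi Q" and ext: "\<forall>p\<in>voronoi Q. \<forall>q\<in>voronoi Q. a \<notin> open_segment p q"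
    using vert by (auto simp: voronoi_vertex_def extreme_point_of_def)
  have ci: "c \<in> int_points" and eq: "qf Q a = qf Q (a - c)" using cD by (auto simp: Dset_def)
  have acV: "a - c \<in> voronoi Q"
    using shift_in_voronoi[OF aV int_points_uminus[OF ci]] eq by simp
  have "\<forall>p\<in>voronoi Q. \<forall>q\<in>voronoi Q. a - c \<notin> open_segment p q"
  proof (intro ballI notI)
    fix p q assume pV: "p \<in> voronoi Q" and qV: "q \<in> voronoi Q" and s: "a - c \<in> open_segment p q"
    then obtain u where pq: "p \<noteq> q" and u: "0 < u" "u < 1" and acu: "a - c = (1-u) *\<^sub>R p + u *\<^sub>R q"
      by (auto simp: in_segment)
    have fp: "qf Q (p + c) - qf Q p \<ge> 0"
      using pV int_points_uminus[OF ci] by (auto simp: voronoi_def)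
    have fq: "qf Q (q + c) - qf Q q \<ge> 0"
      using qV int_points_uminus[OF ci] by (auto simp: voronoi_def)
    have "(1-u) * (qf Q (p + c) - qf Q p) + u * (qf Q (q + c) - qf Q q) = 0"
      using qf_shift_comb[of Q u p q c] acu[symmetric] eq by simp
    then have "qf Q (p + c) - qf Q p = 0 \<and> qf Q (q + c) - qf Q q = 0"
      using fp fq u
      by (smt (verit, best) mult_nonneg_nonneg mult_pos_pos)
    then have pc: "p + c \<in> voronoi Q" and qc: "q + c \<in> voronoi Q"
      using shift_in_voronoi[OF pV ci] shift_in_voronoi[OF qV ci] by auto
    have "a \<in> open_segment (c + p) (c + q)"
      unfolding open_segment_translation using s
      by (metis (no_types, lifting) add.commute diff_add_cancel image_eqI)
    then show False using ext pc qc by (simp add: add.commute)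
  qed
  then show ?thesis using acV by (simp add: voronoi_vertex_def extreme_point_of_def)
qed

theorem corollary2p5:
  fixes src tgt :: "'m::finite \<Rightarrow> 'v::finite"
    and B :: "int ^ 'm ^ 'g::finite"
    and Q :: "real ^ 'g ^ 'g"
    and a :: "real ^ 'g"
  assumes "graph_connected src tgt"
    and "CARD('g) = CARD('m) + 1 - CARD('v)"
    and "CARD('g) \<ge> 1"
    and "rows_Z_basis B (H1 src tgt)"
    and "Q = (\<chi> i j. real_of_int ((B ** transpose B) $ i $ j))"
    and "voronoi_vertex Q a"
  shows "convex hull (vertex_class Q a) = (\<lambda>x. a - x) ` (convex hull (Dset Q a))
         \<and> card (vertex_class Q a) = card (Dset Q a)"
proof -
  have vc: "vertex_class Q a = (\<lambda>x. a - x) ` Dset Q a"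
    using key[OF assms(6)] by (auto simp: vertex_class_def)
  have f: "(\<lambda>x. a - x) = (\<lambda>x. a + (-1) *\<^sub>R x)" by auto
  have "convex hull (vertex_class Q a) = (\<lambda>x. a - x) ` (convex hull (Dset Q a))"
    unfolding vc f by (rule convex_hull_affinity)
  moreover have "card (vertex_class Q a) = card (Dset Q a)"
    unfolding vc by (rule card_image) (auto simp: inj_on_def)
  ultimately show ?thesis by simp
qed

end
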